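(* Let $K$ be a field of characteristic zero, $x=(x_1,\dots,x_n)$, and let $f\in K[x]$ with $\deg f\neq 1$. Fix an index $i$ and suppose that $h:=f-x_i$ is a polynomial in a linear form, i.e. $h=q(\ell)$ for some $q\in K[t]$ and some linear form $\ell\in K[x]$. If $h\in K[x_i]$, then $f$ is not a component of a Keller map. If $h\notin K[x_i]$, then $f$ is a tame coordinate.
   Context: A Keller map is a polynomial map $F\in K[x]^n$ with $\det\mathcal{J}F\in K^{*}$. A polynomial $f$ is a tame coordinate if it is a component of a tame automorphism of $K[x]$, i.e. of an invertible polynomial map that is a composition of invertible linear (affine) maps and elementary maps $(x_1+p(x_2,\dots,x_n),x_2,\dots,x_n)$. *)

theory Defs
  imports "HOL-Library.Poly_Mapping" "HOL-Computational_Algebra.Polynomial"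
          "HOL-Combinatorics.Permutations"
begin

text \<open>The variables
  x_1..x_n of the paper are the indices 0..n-1 here.\<close>

type_synonym 'a mpoly = "(nat \<Rightarrow>\<^sub>0 nat) \<Rightarrow>\<^sub>0 'a"

definition mvar :: "nat \<Rightarrow> 'a::comm_ring_1 mpoly" where
  "mvar i = Poly_Mapping.single (Poly_Mapping.single i 1) 1"

definition mconst :: "'a::comm_ring_1 \<Rightarrow> 'a mpoly" where
  "mconst c = Poly_Mapping.single 0 c"

definition vars_in :: "nat set \<Rightarrow> 'a::zero mpoly \<Rightarrow> bool" where
  "vars_in V p \<longleftrightarrow> (\<forall>m\<in>Poly_Mapping.keys p. Poly_Mapping.keys m \<subseteq> V)"

text \<open>total degree (the zero polynomial gets degree 0)\<close>
definition mon_deg :: "(nat \<Rightarrow>\<^sub>0 nat) \<Rightarrow> nat" where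
  "mon_deg m = (\<Sum>i\<in>Poly_Mapping.keys m. Poly_Mapping.lookup m i)"

definition total_deg :: "'a::zero mpoly \<Rightarrow> nat" where
  "total_deg p = Max (insert 0 (mon_deg ` Poly_Mapping.keys p))"

definition msubst :: "(nat \<Rightarrow> 'a::comm_ring_1 mpoly) \<Rightarrow> 'a mpoly \<Rightarrow> 'a mpoly" where
  "msubst \<sigma> p = (\<Sum>m\<in>Poly_Mapping.keys p. mconst (Poly_Mapping.lookup p m) * (\<Prod>i\<in>Poly_Mapping.keys m. \<sigma> i ^ Poly_Mapping.lookup m i))"

definition mpderiv :: "nat \<Rightarrow> 'a::comm_ring_1 mpoly \<Rightarrow> 'a mpoly" where
  "mpderiv i p = (\<Sum>m\<in>Poly_Mapping.keys p.
      Poly_Mapping.single (m - Poly_Mapping.single i 1) (of_nat (Poly_Mapping.lookup m i) * Poly_Mapping.lookup p m))"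

definition poly_map :: "nat \<Rightarrow> (nat \<Rightarrow> 'a::comm_ring_1 mpoly) \<Rightarrow> bool" where
  "poly_map n F \<longleftrightarrow> (\<forall>j<n. vars_in {..<n} (F j))"

definition jac_det :: "nat \<Rightarrow> (nat \<Rightarrow> 'a::comm_ring_1 mpoly) \<Rightarrow> 'a mpoly" where
  "jac_det n F = (\<Sum>p | p permutes {..<n}.
      of_int (sign p) * (\<Prod>j<n. mpderiv (p j) (F j)))"

definition keller_map :: "nat \<Rightarrow> (nat \<Rightarrow> 'a::field mpoly) \<Rightarrow> bool" where
  "keller_map n F \<longleftrightarrow> poly_map n F \<and> (\<exists>c. c \<noteq> 0 \<and> jac_det n F = mconst c)"

definition keller_component :: "nat \<Rightarrow> 'a::field mpoly \<Rightarrow> bool" where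
  "keller_component n f \<longleftrightarrow> (\<exists>F j. keller_map n F \<and> j < n \<and> F j = f)"

definition pm_comp :: "(nat \<Rightarrow> 'a::comm_ring_1 mpoly) \<Rightarrow> (nat \<Rightarrow> 'a mpoly) \<Rightarrow> nat \<Rightarrow> 'a mpoly" where
  "pm_comp F G = (\<lambda>j. msubst G (F j))"

definition affine_auto :: "nat \<Rightarrow> (nat \<Rightarrow> 'a::field mpoly) \<Rightarrow> bool" where
  "affine_auto n F \<longleftrightarrow> (\<exists>A b.
      (\<Sum>p | p permutes {..<n}. of_int (sign p) * (\<Prod>j<n. A j (p j))) \<noteq> (0::'a) \<and>
      (\<forall>j<n. F j = (\<Sum>k<n. mconst (A j k) * mvar k) + mconst (b j)) \<and>
      (\<forall>j\<ge>n. F j = mvar j))"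

definition elementary :: "nat \<Rightarrow> (nat \<Rightarrow> 'a::field mpoly) \<Rightarrow> bool" where
  "elementary n F \<longleftrightarrow> 0 < n \<and> (\<exists>p. vars_in {1..<n} p \<and>
      F 0 = mvar 0 + p \<and> (\<forall>j. j \<noteq> 0 \<longrightarrow> F j = mvar j))"

inductive tame :: "nat \<Rightarrow> (nat \<Rightarrow> 'a::field mpoly) \<Rightarrow> bool" for n where
  tame_affine: "affine_auto n F \<Longrightarrow> tame n F"
| tame_elem: "elementary n F \<Longrightarrow> tame n F"
| tame_comp: "tame n F \<Longrightarrow> tame n G \<Longrightarrow> tame n (pm_comp F G)"

definition tame_coordinate :: "nat \<Rightarrow> 'a::field mpoly \<Rightarrow> bool" where
  "tame_coordinate n f \<longleftrightarrow> (\<exists>F j. tame n F \<and> j < n \<and> F j = f)"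

end

theory Submission imports Defs begin

definition Phi :: "('a::comm_ring_1 \<Rightarrow> 'b::comm_ring_1) \<Rightarrow> ((nat\<Rightarrow>\<^sub>0nat) \<Rightarrow> 'b) \<Rightarrow> 'a mpoly \<Rightarrow> 'b" where
  "Phi e w p = (\<Sum>m\<in>Poly_Mapping.keys p. e (Poly_Mapping.lookup p m) * w m)"

lemma Phi_superset:
  assumes "e 0 = 0" "finite S" "Poly_Mapping.keys p \<subseteq> S"
  shows "Phi e w p = (\<Sum>m\<in>S. e (Poly_Mapping.lookup p m) * w m)"
  unfolding Phi_def
  by (rule sum.mono_neutral_left) (use assms in \<open>auto simp: in_keys_iff\<close>)

lemma Phi_add:
  assumes "e 0 = 0" "\<And>a b. e (a + b) = e a + e b"
  shows "Phi e w (p + q) = Phi e w p + Phi e w q"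
proof -
  let ?S = "Poly_Mapping.keys p \<union> Poly_Mapping.keys q"
  have "Phi e w (p + q) = (\<Sum>m\<in>?S. e (Poly_Mapping.lookup (p+q) m) * w m)"
    using keys_add[of p q] by (intro Phi_superset assms) auto
  also have "\<dots> = (\<Sum>m\<in>?S. e (Poly_Mapping.lookup p m) * w m) + (\<Sum>m\<in>?S. e (Poly_Mapping.lookup q m) * w m)"
    by (simp add: lookup_add assms(2) distrib_right sum.distrib)
  also have "\<dots> = Phi e w p + Phi e w q"
    using Phi_superset[of e ?S p w] Phi_superset[of e ?S q w] assms(1) by auto
  finally show ?thesis .
qed

lemma Phi_zero: "Phi e w 0 = 0" by (simp add: Phi_def)

lemma Phi_sum:
  assumes "e 0 = 0" "\<And>a b. e (a + b) = e a + e b"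
  shows "Phi e w (\<Sum>x\<in>A. f x) = (\<Sum>x\<in>A. Phi e w (f x))"
  by (induction A rule: infinite_finite_induct) (auto simp: Phi_zero Phi_add[OF assms])

lemma Phi_single:
  assumes "e 0 = 0"
  shows "Phi e w (Poly_Mapping.single m a) = e a * w m"
  using assms by (simp add: Phi_def)

lemma pm_expand: "p = (\<Sum>m\<in>Poly_Mapping.keys p. Poly_Mapping.single m (Poly_Mapping.lookup p m))"
  by (rule poly_mapping_eqI) (auto simp: lookup_sum lookup_single when_def in_keys_iff
        intro: sum.neutral)

lemma Phi_mult:
  assumes e0: "e 0 = 0" and eadd: "\<And>a b. e (a + b) = e a + e b"
    and emult: "\<And>a b. e (a * b) = e a * e b" and wm: "\<And>m m'. w (m + m') = w m * w m'"
  shows "Phi e w (p * q) = Phi e w p * Phi e w q"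
proof -
  have "p * q = (\<Sum>m\<in>Poly_Mapping.keys p. Poly_Mapping.single m (Poly_Mapping.lookup p m)) *
      (\<Sum>m\<in>Poly_Mapping.keys q. Poly_Mapping.single m (Poly_Mapping.lookup q m))"
    using pm_expand[of p] pm_expand[of q] by (rule arg_cong2[where f="(*)"])
  also have "\<dots> = (\<Sum>m\<in>Poly_Mapping.keys p. \<Sum>m'\<in>Poly_Mapping.keys q.
      Poly_Mapping.single (m + m') (Poly_Mapping.lookup p m * Poly_Mapping.lookup q m'))"
    by (simp add: sum_product mult_single)
  finally have pq: "p * q = \<dots>" .
  have "Phi e w (p * q) = (\<Sum>m\<in>Poly_Mapping.keys p. \<Sum>m'\<in>Poly_Mapping.keys q.
      e (Poly_Mapping.lookup p m) * w m * (e (Poly_Mapping.lookup q m') * w m'))"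
    unfolding pq by (simp add: Phi_sum[where e=e, OF e0 eadd] Phi_single[where e=e, OF e0] emult wm mult_ac)
  also have "\<dots> = Phi e w p * Phi e w q"
    unfolding Phi_def by (simp add: sum_product)
  finally show ?thesis .
qed

lemma Phi_one:
  assumes "e 1 = 1" "w 0 = 1"
  shows "Phi e w 1 = 1"
  using assms by (simp add: Phi_def)

definition psi :: "nat \<Rightarrow> 'a::comm_ring_1 mpoly \<Rightarrow> 'a poly" where
  "psi i = Phi (\<lambda>a. [:a:]) (\<lambda>m. monom 1 (Poly_Mapping.lookup m i))"

lemma psi_add: "psi i (p + q) = psi i p + psi i q"
  unfolding psi_def by (rule Phi_add) auto

lemma psi_sum: "psi i (\<Sum>x\<in>A. f x) = (\<Sum>x\<in>A. psi i (f x))"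
  unfolding psi_def by (rule Phi_sum) auto

lemma psi_mult: "psi i (p * q) = psi i p * psi i q"
  unfolding psi_def by (rule Phi_mult) (auto simp: lookup_add mult_monom)

lemma psi_single: "psi i (Poly_Mapping.single m a) = monom a (Poly_Mapping.lookup m i)"
  unfolding psi_def by (subst Phi_single) (auto simp: smult_monom)

lemma psi_mconst: "psi i (mconst a) = [:a:]"
  by (simp add: mconst_def psi_single monom_0)

lemma pderiv_sum: "pderiv (\<Sum>x\<in>A. f x) = (\<Sum>x\<in>A. pderiv (f x))"
  by (induction A rule: infinite_finite_induct) (auto simp: pderiv_add)

lemma psi_mpderiv: "psi i (mpderiv i p) = pderiv (psi i p)"
proof -
  have "psi i (mpderiv i p) = (\<Sum>m\<in>Poly_Mapping.keys p.
      monom (of_nat (Poly_Mapping.lookup m i) * Poly_Mapping.lookup p m) (Poly_Mapping.lookup m i - 1))"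
    unfolding mpderiv_def psi_sum psi_single by (simp add: lookup_minus)
  also have "\<dots> = pderiv (psi i p)"
    unfolding psi_def Phi_def pderiv_sum
    by (intro sum.cong refl) (simp add: smult_monom pderiv_monom)
  finally show ?thesis .
qed

definition mon :: "(nat \<Rightarrow> 'a::comm_ring_1 mpoly) \<Rightarrow> (nat \<Rightarrow>\<^sub>0 nat) \<Rightarrow> 'a mpoly" where
  "mon \<sigma> m = (\<Prod>i\<in>Poly_Mapping.keys m. \<sigma> i ^ Poly_Mapping.lookup m i)"

lemma mon_superset:
  assumes "finite S" "Poly_Mapping.keys m \<subseteq> S"
  shows "mon \<sigma> m = (\<Prod>i\<in>S. \<sigma> i ^ Poly_Mapping.lookup m i)"
  unfolding mon_def
  by (rule prod.mono_neutral_left) (use assms in \<open>auto simp: in_keys_iff\<close>)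

lemma mon_add: "mon \<sigma> (m + m') = mon \<sigma> m * mon \<sigma> m'"
proof -
  let ?S = "Poly_Mapping.keys m \<union> Poly_Mapping.keys m'"
  have "mon \<sigma> (m + m') = (\<Prod>i\<in>?S. \<sigma> i ^ Poly_Mapping.lookup (m + m') i)"
    using keys_add[of m m'] by (intro mon_superset) auto
  also have "\<dots> = (\<Prod>i\<in>?S. \<sigma> i ^ Poly_Mapping.lookup m i) * (\<Prod>i\<in>?S. \<sigma> i ^ Poly_Mapping.lookup m' i)"
    by (simp add: lookup_add power_add prod.distrib)
  also have "\<dots> = mon \<sigma> m * mon \<sigma> m'"
    using mon_superset[of ?S m \<sigma>] mon_superset[of ?S m' \<sigma>] by auto
  finally show ?thesis .
qed

lemma mon_zero: "mon \<sigma> 0 = 1" by (simp add: mon_def)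

lemma msubst_Phi: "msubst \<sigma> = Phi mconst (mon \<sigma>)"
  by (auto simp: fun_eq_iff msubst_def Phi_def mon_def)

lemma mconst_0: "mconst 0 = 0" by (simp add: mconst_def)
lemma mconst_1: "mconst 1 = 1" by (simp add: mconst_def)
lemma mconst_add: "mconst (a + b) = mconst a + mconst b" by (simp add: mconst_def single_add)
lemma mconst_mult: "mconst (a * b) = mconst a * mconst b" by (simp add: mconst_def mult_single)

lemma msubst_add: "msubst \<sigma> (p + q) = msubst \<sigma> p + msubst \<sigma> q"
  unfolding msubst_Phi by (rule Phi_add) (auto simp: mconst_0 mconst_add)

lemma msubst_sum: "msubst \<sigma> (\<Sum>x\<in>A. f x) = (\<Sum>x\<in>A. msubst \<sigma> (f x))"
  unfolding msubst_Phi by (rule Phi_sum) (auto simp: mconst_0 mconst_add)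

lemma msubst_mult: "msubst \<sigma> (p * q) = msubst \<sigma> p * msubst \<sigma> q"
  unfolding msubst_Phi by (rule Phi_mult) (auto simp: mconst_0 mconst_add mconst_mult mon_add)

lemma msubst_single: "msubst \<sigma> (Poly_Mapping.single m a) = mconst a * mon \<sigma> m"
  unfolding msubst_Phi by (rule Phi_single) (simp add: mconst_0)

lemma msubst_mconst: "msubst \<sigma> (mconst a) = mconst a"
  by (simp add: mconst_def msubst_single[unfolded mconst_def] mon_zero)

lemma msubst_mvar: "msubst \<sigma> (mvar j) = \<sigma> j"
  by (simp add: mvar_def msubst_single mconst_1 mon_def)

lemma msubst_zero: "msubst \<sigma> 0 = 0" by (simp add: msubst_def)

lemma msubst_poly: "msubst \<sigma> (poly (map_poly mconst q) x) = poly (map_poly mconst q) (msubst \<sigma> x)"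
  by (induction q) (auto simp: map_poly_pCons mconst_0 msubst_add msubst_mult msubst_mconst msubst_zero)

lemma vars_in_add: "vars_in V p \<Longrightarrow> vars_in V q \<Longrightarrow> vars_in V (p + q)"
  unfolding vars_in_def using keys_add[of p q] by blast

lemma keys_add_nat: "Poly_Mapping.keys ((a::nat\<Rightarrow>\<^sub>0nat) + b) \<subseteq> Poly_Mapping.keys a \<union> Poly_Mapping.keys b"
  by (rule keys_add)

lemma vars_in_mult: "vars_in V p \<Longrightarrow> vars_in V q \<Longrightarrow> vars_in V (p * q)"
  unfolding vars_in_def using keys_mult[of p q] keys_add_nat by blast

lemma vars_in_mconst: "vars_in V (mconst a)"
  by (simp add: vars_in_def mconst_def)

lemma vars_in_mvar: "j \<in> V \<Longrightarrow> vars_in V (mvar j)"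
  by (simp add: vars_in_def mvar_def)

lemma vars_in_zero: "vars_in V 0" by (simp add: vars_in_def)

lemma vars_in_lookup0: "vars_in V f \<Longrightarrow> m \<in> Poly_Mapping.keys f \<Longrightarrow> j \<notin> V \<Longrightarrow> Poly_Mapping.lookup m j = 0"
  unfolding vars_in_def by (meson in_keys_iff subsetD)

lemma vars_in_poly: "vars_in V x \<Longrightarrow> vars_in V (poly (map_poly mconst q) x)"
  by (induction q) (auto simp: map_poly_pCons mconst_0 vars_in_add vars_in_mult vars_in_mconst vars_in_zero)

lemma vars_in_single_key:
  assumes "vars_in {i} f" "m \<in> Poly_Mapping.keys f"
  shows "m = Poly_Mapping.single i (Poly_Mapping.lookup m i)"
proof (rule poly_mapping_eqI)
  fix j show "Poly_Mapping.lookup m j = Poly_Mapping.lookup (Poly_Mapping.single i (Poly_Mapping.lookup m i)) j"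
    using assms vars_in_lookup0[OF assms, of j] by (cases "j = i") (auto simp: lookup_single)
qed

lemma mpderiv_other:
  assumes "vars_in {i} f" "k \<noteq> i"
  shows "mpderiv k f = 0"
  unfolding mpderiv_def
proof (rule sum.neutral, rule ballI)
  fix m assume "m \<in> Poly_Mapping.keys f"
  then have "Poly_Mapping.lookup m k = 0" using assms vars_in_lookup0 by fastforce
  then show "Poly_Mapping.single (m - Poly_Mapping.single k 1) (of_nat (Poly_Mapping.lookup m k) * Poly_Mapping.lookup f m) = 0"
    by simp
qed

lemma coeff_psi:
  assumes "vars_in {i} f"
  shows "coeff (psi i f) k = Poly_Mapping.lookup f (Poly_Mapping.single i k)"
proof -
  have "coeff (psi i f) k = (\<Sum>m\<in>Poly_Mapping.keys f. if Poly_Mapping.lookup m i = k then Poly_Mapping.lookup f m else 0)"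
    unfolding psi_def Phi_def coeff_sum by (intro sum.cong refl) (simp add: smult_monom)
  also have "\<dots> = (\<Sum>m\<in>Poly_Mapping.keys f. if m = Poly_Mapping.single i k then Poly_Mapping.lookup f m else 0)"
    by (intro sum.cong refl) (metis vars_in_single_key[OF assms] lookup_single_eq)
  also have "\<dots> = Poly_Mapping.lookup f (Poly_Mapping.single i k)"
    by (simp add: sum.delta in_keys_iff)
  finally show ?thesis .
qed

lemma mon_deg_single: "mon_deg (Poly_Mapping.single i k) = k"
  by (simp add: mon_deg_def)

lemma jac_factor:
  assumes "j0 < n" "F j0 = f" "\<And>k. k \<noteq> i \<Longrightarrow> mpderiv k f = 0"
  shows "\<exists>D. jac_det n F = mpderiv i f * D"
proof -
  define D where "D = (\<Sum>p | p permutes {..<n}. if p j0 = i then of_int (sign p) *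
      (\<Prod>j\<in>{..<n}-{j0}. mpderiv (p j) (F j)) else 0)"
  have "jac_det n F = mpderiv i f * D"
    unfolding jac_det_def D_def sum_distrib_left
  proof (intro sum.cong refl)
    fix p
    have "(\<Prod>j<n. mpderiv (p j) (F j)) = mpderiv (p j0) (F j0) * (\<Prod>j\<in>{..<n}-{j0}. mpderiv (p j) (F j))"
      using assms(1) by (subst prod.remove[of _ j0]) auto
    then show "of_int (sign p) * (\<Prod>j<n. mpderiv (p j) (F j)) =
      mpderiv i f * (if p j0 = i then of_int (sign p) * (\<Prod>j\<in>{..<n}-{j0}. mpderiv (p j) (F j)) else 0)"
      using assms(2,3) by (cases "p j0 = i") (auto simp: mult_ac)
  qed
  then show ?thesis by blast
qed

lemma part1:
  fixes f :: "'a::field_char_0 mpoly"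
  assumes vf: "vars_in {i} f" and deg: "total_deg f \<noteq> 1"
  shows "\<not> keller_component n f"
proof
  assume "keller_component n f"
  then obtain F j0 c where j0: "j0 < n" "F j0 = f" and c: "c \<noteq> 0" "jac_det n F = mconst c"
    unfolding keller_component_def keller_map_def by blast
  obtain D where D: "jac_det n F = mpderiv i f * D"
    using jac_factor[of j0 n F f i, OF j0] mpderiv_other[OF vf] by blast
  define P where "P = psi i f"
  have eq: "[:c:] = pderiv P * psi i D"
    using c D by (metis P_def psi_mconst psi_mpderiv psi_mult)
  have nz: "pderiv P \<noteq> 0" "psi i D \<noteq> 0" using eq c by auto
  have "degree (pderiv P) = 0"
    using degree_mult_eq[OF nz] eq by (metis add_is_0 degree_pCons_0)
  then have dP: "degree P \<le> 1" by (simp add: degree_pderiv)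
  have hi: "coeff P k = 0" if "k \<ge> 2" for k using dP that by (intro coeff_eq_0) auto
  have c1: "coeff P 1 \<noteq> 0"
  proof
    assume a: "coeff P 1 = 0"
    have "pderiv P = 0"
    proof (intro poly_eqI)
      fix k show "coeff (pderiv P) k = coeff 0 k"
        using a hi[of "Suc k"] by (cases k) (auto simp: coeff_pderiv)
    qed
    with nz show False by simp
  qed
  have in1: "Poly_Mapping.single i 1 \<in> Poly_Mapping.keys f"
    using c1 coeff_psi[OF vf, of 1] by (simp add: P_def in_keys_iff)
  have le1: "mon_deg m \<le> 1" if "m \<in> Poly_Mapping.keys f" for m
  proof -
    have m: "m = Poly_Mapping.single i (Poly_Mapping.lookup m i)" by (rule vars_in_single_key[OF vf that])
    have "Poly_Mapping.lookup m i \<le> 1"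
    proof (rule ccontr)
      assume "\<not> ?thesis"
      then have "coeff P (Poly_Mapping.lookup m i) = 0" by (intro hi) auto
      then have "Poly_Mapping.lookup f m = 0" using coeff_psi[OF vf] m P_def by metis
      with that show False by (simp add: in_keys_iff)
    qed
    then show ?thesis using m mon_deg_single by metis
  qed
  have "insert 0 (mon_deg ` Poly_Mapping.keys f) = {0, 1}"
  proof -
    have "1 \<in> mon_deg ` Poly_Mapping.keys f" using in1 mon_deg_single by (metis image_eqI)
    moreover have "mon_deg ` Poly_Mapping.keys f \<subseteq> {0,1}" using le1 by fastforce
    ultimately show ?thesis by auto
  qed
  then have "total_deg f = 1" by (simp add: total_deg_def)
  with deg show False by simp
qed


lemma det_single_perm:
  fixes A :: "nat \<Rightarrow> nat \<Rightarrow> 'a::comm_ring_1"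
  assumes p0: "p0 permutes {..<n}"
    and z: "\<And>p. p permutes {..<n} \<Longrightarrow> p \<noteq> p0 \<Longrightarrow> (\<Prod>j<n. A j (p j)) = 0"
  shows "(\<Sum>p | p permutes {..<n}. of_int (sign p) * (\<Prod>j<n. A j (p j))) = of_int (sign p0) * (\<Prod>j<n. A j (p0 j))"
proof -
  have fin: "finite {p. p permutes {..<n}}" by (rule finite_permutations) simp
  have "(\<Sum>p | p permutes {..<n}. of_int (sign p) * (\<Prod>j<n. A j (p j))) =
    of_int (sign p0) * (\<Prod>j<n. A j (p0 j)) + (\<Sum>p\<in>{p. p permutes {..<n}} - {p0}. of_int (sign p) * (\<Prod>j<n. A j (p j)))"
    using p0 fin by (subst sum.remove[of _ p0]) auto
  also have "(\<Sum>p\<in>{p. p permutes {..<n}} - {p0}. of_int (sign p) * (\<Prod>j<n. A j (p j))) = 0"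
    by (rule sum.neutral) (auto simp: z)
  finally show ?thesis by simp
qed

lemma perm_eq_on:
  assumes "p permutes S" "q permutes S" "\<And>x. x \<in> S \<Longrightarrow> p x = q x"
  shows "p = q"
proof
  fix x show "p x = q x"
    using assms permutes_not_in[OF assms(1), of x] permutes_not_in[OF assms(2), of x] by (cases "x \<in> S") auto
qed

lemma sum_mvar_delta:
  assumes "t < n"
  shows "(\<Sum>m<n. mconst (if m = t then 1 else 0) * mvar m) + mconst 0 = (mvar t :: 'a::comm_ring_1 mpoly)"
proof -
  have "(\<Sum>m<n. mconst (if m = t then 1 else 0) * mvar m) = (\<Sum>m<n. if m = t then mvar m else (0::'a mpoly))"
    by (intro sum.cong refl) (simp add: mconst_0 mconst_1)
  then show ?thesis using assms by (simp add: mconst_0)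
qed

lemma affine_perm:
  fixes \<tau> :: "nat \<Rightarrow> nat"
  assumes tau: "\<tau> permutes {..<n}"
  shows "affine_auto n (\<lambda>j. if j < n then mvar (\<tau> j) else (mvar j :: 'a::field_char_0 mpoly))"
  unfolding affine_auto_def
proof (intro exI[of _ "\<lambda>j m. if m = \<tau> j then (1::'a) else 0"] exI[of _ "\<lambda>_. (0::'a)"] conjI allI impI)
  have "(\<Sum>p | p permutes {..<n}. of_int (sign p) * (\<Prod>j<n. (if p j = \<tau> j then 1 else 0))) =
    of_int (sign \<tau>) * (\<Prod>j<n. (if \<tau> j = \<tau> j then 1 else (0::'a)))"
  proof (rule det_single_perm[OF tau])
    fix p assume p: "p permutes {..<n}" "p \<noteq> \<tau>"
    then obtain j where j: "j < n" "p j \<noteq> \<tau> j" using perm_eq_on[OF p(1) tau] by blast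
    show "(\<Prod>j<n. (if p j = \<tau> j then 1 else (0::'a))) = 0"
      by (rule prod_zero) (use j in auto)
  qed
  then show "(\<Sum>p | p permutes {..<n}. of_int (sign p) * (\<Prod>j<n. (if p j = \<tau> j then 1 else 0))) \<noteq> (0::'a)"
    by simp
next
  fix j assume "j < n"
  then have "\<tau> j < n" using permutes_in_image[OF tau] by auto
  then show "(if j < n then mvar (\<tau> j) else (mvar j :: 'a mpoly)) = (\<Sum>k<n. mconst (if k = \<tau> j then 1 else 0) * mvar k) + mconst 0"
  proof -
    have e: "(\<Sum>k<n. mconst (if k = \<tau> j then 1 else 0) * mvar k) + mconst 0 = (mvar (\<tau> j) :: 'a mpoly)"
      by (rule sum_mvar_delta) fact
    have "(if j < n then mvar (\<tau> j) else mvar j) = (mvar (\<tau> j) :: 'a mpoly)" using \<open>j < n\<close> by simp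
    show ?thesis by (subst if_P[OF \<open>j < n\<close>]) (rule e[symmetric])
  qed
qed simp

lemma affine_row:
  assumes k: "k < n" and ck: "c k \<noteq> (0::'a::field_char_0)"
  shows "affine_auto n (\<lambda>j. if j = k then (\<Sum>j<n. mconst (c j) * mvar j) else mvar j)"
  unfolding affine_auto_def
proof (intro exI[of _ "\<lambda>j m. if j = k then c m else if m = j then (1::'a) else 0"] exI[of _ "\<lambda>_. (0::'a)"] conjI allI impI)
  let ?A = "\<lambda>j m. if j = k then c m else if m = j then 1 else (0::'a)"
  have idp: "id permutes {..<n}" by (rule permutes_id)
  have "(\<Sum>p | p permutes {..<n}. of_int (sign p) * (\<Prod>j<n. ?A j (p j))) =
    of_int (sign (id::nat\<Rightarrow>nat)) * (\<Prod>j<n. ?A j (id j))"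
  proof (rule det_single_perm[OF idp])
    fix p assume p: "p permutes {..<n}" "p \<noteq> id"
    have "\<exists>j<n. j \<noteq> k \<and> p j \<noteq> j"
    proof (rule ccontr)
      assume "\<not> ?thesis"
      then have fix_: "\<And>j. j < n \<Longrightarrow> j \<noteq> k \<Longrightarrow> p j = j" by blast
      have "p k = k"
      proof (rule ccontr)
        assume ne: "p k \<noteq> k"
        have "p k < n" using permutes_in_image[OF p(1)] k by auto
        then have "p (p k) = p k" using fix_ ne by blast
        then show False using permutes_inj[OF p(1)] ne by (metis injD)
      qed
      then have "p = id" using perm_eq_on[OF p(1) idp] fix_ by (metis id_apply lessThan_iff)
      with p show False by simp
    qed
    then obtain j where j: "j < n" "j \<noteq> k" "p j \<noteq> j" by blast
    show "(\<Prod>j<n. ?A j (p j)) = 0" by (rule prod_zero) (use j in auto)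
  qed
  also have "(\<Prod>j<n. ?A j (id j)) = c k"
  proof -
    have "(\<Prod>j<n. ?A j (id j)) = ?A k k * (\<Prod>j\<in>{..<n}-{k}. ?A j (id j))"
      using k by (subst prod.remove[of _ k]) auto
    also have "(\<Prod>j\<in>{..<n}-{k}. ?A j (id j)) = 1" by (rule prod.neutral) auto
    finally show ?thesis by simp
  qed
  finally show "(\<Sum>p | p permutes {..<n}. of_int (sign p) * (\<Prod>j<n. ?A j (p j))) \<noteq> 0"
    using ck by simp
next
  let ?A = "\<lambda>j m. if j = k then c m else if m = j then 1 else (0::'a)"
  fix j assume j: "j < n"
  show "(if j = k then (\<Sum>j<n. mconst (c j) * mvar j) else mvar j) =
    (\<Sum>m<n. mconst (?A j m) * mvar m) + mconst 0"
  proof (cases "j = k")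
    case True then show ?thesis by (simp add: mconst_0)
  next
    case False then show ?thesis using sum_mvar_delta[OF j, where 'a='a] by simp
  qed
next
  fix j assume "n \<le> j" then show "(if j = k then (\<Sum>j<n. mconst (c j) * mvar j) else mvar j) = mvar j"
    using k by auto
qed


lemma vars_in_sum: "(\<And>x. x \<in> A \<Longrightarrow> vars_in V (f x)) \<Longrightarrow> vars_in V (\<Sum>x\<in>A. f x)"
  by (induction A rule: infinite_finite_induct) (auto simp: vars_in_zero vars_in_add)

lemma part2:
  fixes q :: "'a::field_char_0 poly"
  assumes i: "i < n" and k: "k < n" "k \<noteq> i" "c k \<noteq> 0" and l: "l = (\<Sum>j<n. mconst (c j) * mvar j)"
  shows "tame_coordinate n (mvar i + poly (map_poly mconst q) l)"
proof -
  have n2: "1 < n" using i k by linarith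
  define k' where "k' = Transposition.transpose 0 i k"
  have k'0: "k' \<noteq> 0" using k(2) by (auto simp: k'_def transpose_eq_iff)
  have k'n: "k' < n" using i k n2 by (auto simp: k'_def Transposition.transpose_def)
  define \<tau> where "\<tau> = Transposition.transpose 0 i \<circ> Transposition.transpose 1 k'"
  have tau: "\<tau> permutes {..<n}"
    unfolding \<tau>_def using i k'n n2 by (intro permutes_compose permutes_swap_id) auto
  have t0: "\<tau> 0 = i" using k'0 by (simp add: \<tau>_def)
  have t1: "\<tau> 1 = k" by (simp add: \<tau>_def k'_def)
  define Q where "Q = map_poly mconst q"
  define E where "E = (\<lambda>j. if j = 0 then mvar 0 + poly Q (mvar 1) else (mvar j :: 'a mpoly))"
  have "elementary n E"
    unfolding elementary_def
  proof (intro conjI exI[of _ "poly Q (mvar 1)"])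
    show "vars_in {1..<n} (poly Q (mvar 1))"
      unfolding Q_def using n2 by (intro vars_in_poly vars_in_mvar) auto
  qed (use n2 in \<open>auto simp: E_def\<close>)
  then have tE: "tame n E" by (rule tame_elem)
  define S where "S = (\<lambda>j. if j < n then mvar (\<tau> j) else (mvar j :: 'a mpoly))"
  have tS: "tame n S" unfolding S_def by (rule tame_affine, rule affine_perm[OF tau])
  define T where "T = (\<lambda>j. if j = k then (\<Sum>j<n. mconst (c j) * mvar j) else (mvar j :: 'a mpoly))"
  have tT: "tame n T" unfolding T_def by (rule tame_affine, rule affine_row[of k n c, OF k(1) k(3)])
  have tF: "tame n (pm_comp (pm_comp E S) T)" by (intro tame_comp tE tS tT)
  have "msubst S (E 0) = mvar i + poly Q (mvar k)"
    using n2 i t0 t1 by (simp add: E_def Q_def msubst_add msubst_poly msubst_mvar S_def)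
  then have "pm_comp (pm_comp E S) T 0 = mvar i + poly Q l"
    using k l by (simp add: pm_comp_def Q_def msubst_add msubst_poly msubst_mvar T_def)
  then show ?thesis
    unfolding tame_coordinate_def Q_def using tF n2 by (intro exI[of _ "pm_comp (pm_comp E S) T"] exI[of _ 0]) auto
qed

theorem proposition3p4:
  fixes n i :: nat and f h l :: "'a::field_char_0 mpoly" and q :: "'a poly"
    and c :: "nat \<Rightarrow> 'a"
  assumes f_poly: "vars_in {..<n} f"
    and deg: "total_deg f \<noteq> 1"
    and i: "i < n"
    and h_def: "h = f - mvar i"
    and ell: "l = (\<Sum>j<n. mconst (c j) * mvar j)"
    and hq: "h = poly (map_poly mconst q) l"
  shows "(vars_in {i} h \<longrightarrow> \<not> keller_component n f)
       \<and> (\<not> vars_in {i} h \<longrightarrow> tame_coordinate n f)"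
proof (intro conjI impI)
  have fh: "f = mvar i + h" using h_def by simp
  {
    assume "vars_in {i} h"
    then have "vars_in {i} f" unfolding fh by (intro vars_in_add vars_in_mvar) auto
    then show "\<not> keller_component n f" using part1 deg by blast
  }
  {
    assume nh: "\<not> vars_in {i} h"
    have "\<exists>k<n. k \<noteq> i \<and> c k \<noteq> 0"
    proof (rule ccontr)
      assume "\<not> ?thesis"
      then have z: "\<And>k. k < n \<Longrightarrow> k \<noteq> i \<Longrightarrow> c k = 0" by blast
      have "vars_in {i} l"
        unfolding ell
      proof (rule vars_in_sum)
        fix j assume "j \<in> {..<n}"
        then show "vars_in {i} (mconst (c j) * mvar j)"
          using z[of j] by (cases "j = i") (auto simp: mconst_0 vars_in_zero intro!: vars_in_mult vars_in_mconst vars_in_mvar)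
      qed
      then have "vars_in {i} h" unfolding hq by (rule vars_in_poly)
      with nh show False by simp
    qed
    then obtain k where "k < n" "k \<noteq> i" "c k \<noteq> 0" by blast
    from part2[OF i this ell, of q] show "tame_coordinate n f" using fh hq by simp
  }
qed

end
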